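(* Let $G$ be a connected graph. Then $G$ is a core if and only if there exists a (possibly infinite) graph $H$ such that $G\to H$ and every homomorphism from $G$ to $H$ is locally injective.
   Context: A homomorphism $G\to H$ is an adjacency-preserving map $V(G)\to V(H)$; $G\to H$ means one exists. A homomorphism $\varphi$ is locally injective if $\varphi(u)\ne\varphi(v)$ for any two distinct vertices $u,v$ having a common neighbor. $G$ is a core if every homomorphism $G\to G$ is an automorphism. *)

theory Defs
  imports Main
begin

definition is_graph :: "'a set \<Rightarrow> ('a \<Rightarrow> 'a \<Rightarrow> bool) \<Rightarrow> bool" where
  "is_graph V E \<longleftrightarrow> (\<forall>u v. E u v \<longrightarrow> u \<in> V \<and> v \<in> V) \<and> (\<forall>u v. E u v \<longrightarrow> E v u) \<and> (\<forall>v. \<not> E v v)"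

definition connected_graph :: "'a set \<Rightarrow> ('a \<Rightarrow> 'a \<Rightarrow> bool) \<Rightarrow> bool" where
  "connected_graph V E \<longleftrightarrow> V \<noteq> {} \<and> (\<forall>u\<in>V. \<forall>v\<in>V. E\<^sup>*\<^sup>* u v)"

definition is_hom :: "'a set \<Rightarrow> ('a \<Rightarrow> 'a \<Rightarrow> bool) \<Rightarrow> 'b set \<Rightarrow> ('b \<Rightarrow> 'b \<Rightarrow> bool) \<Rightarrow> ('a \<Rightarrow> 'b) \<Rightarrow> bool" where
  "is_hom VG EG VH EH f \<longleftrightarrow> (\<forall>v\<in>VG. f v \<in> VH) \<and> (\<forall>u v. EG u v \<longrightarrow> EH (f u) (f v))"

definition hom_exists :: "'a set \<Rightarrow> ('a \<Rightarrow> 'a \<Rightarrow> bool) \<Rightarrow> 'b set \<Rightarrow> ('b \<Rightarrow> 'b \<Rightarrow> bool) \<Rightarrow> bool" where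
  "hom_exists VG EG VH EH \<longleftrightarrow> (\<exists>f. is_hom VG EG VH EH f)"

definition locally_injective :: "'a set \<Rightarrow> ('a \<Rightarrow> 'a \<Rightarrow> bool) \<Rightarrow> ('a \<Rightarrow> 'b) \<Rightarrow> bool" where
  "locally_injective V E f \<longleftrightarrow>
     (\<forall>u\<in>V. \<forall>v\<in>V. \<forall>w\<in>V. u \<noteq> v \<and> E u w \<and> E v w \<longrightarrow> f u \<noteq> f v)"

definition is_automorphism :: "'a set \<Rightarrow> ('a \<Rightarrow> 'a \<Rightarrow> bool) \<Rightarrow> ('a \<Rightarrow> 'a) \<Rightarrow> bool" where
  "is_automorphism V E f \<longleftrightarrow> bij_betw f V V \<and> (\<forall>u\<in>V. \<forall>v\<in>V. E (f u) (f v) \<longleftrightarrow> E u v)"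

definition is_core :: "'a set \<Rightarrow> ('a \<Rightarrow> 'a \<Rightarrow> bool) \<Rightarrow> bool" where
  "is_core V E \<longleftrightarrow> (\<forall>f. is_hom V E V E f \<longrightarrow> is_automorphism V E f)"

end

theory Submission
  imports Defs
begin

lemma pow_in:
  assumes "is_hom V E V E f" "x \<in> V" shows "(f^^k) x \<in> V"
  using assms by (induction k) (auto simp: is_hom_def)

lemma pow_edge:
  assumes "is_hom V E V E f" "E u v" shows "E ((f^^k) u) ((f^^k) v)"
  using assms by (induction k) (auto simp: is_hom_def)

lemma pow_li:
  assumes h: "is_hom V E V E f" and li: "locally_injective V E f"
  shows "locally_injective V E (f^^k)"
proof (induction k)
  case 0 then show ?case by (simp add: locally_injective_def)
next
  case (Suc k)
  show ?case unfolding locally_injective_def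
  proof (intro ballI impI)
    fix u v w assume uvw: "u \<in> V" "v \<in> V" "w \<in> V" and c: "u \<noteq> v \<and> E u w \<and> E v w"
    have "(f^^k) u \<noteq> (f^^k) v" using Suc uvw c unfolding locally_injective_def by blast
    moreover have "E ((f^^k) u) ((f^^k) w)" "E ((f^^k) v) ((f^^k) w)"
      using c pow_edge[OF h] by auto
    ultimately have "f ((f^^k) u) \<noteq> f ((f^^k) v)"
      using li pow_in[OF h] uvw unfolding locally_injective_def by blast
    then show "(f^^Suc k) u \<noteq> (f^^Suc k) v" by simp
  qed
qed

lemma key:
  assumes g: "is_graph V E" and fin: "finite V" and con: "connected_graph V E"
    and h: "is_hom V E V E f" and li: "locally_injective V E f"
  shows "is_automorphism V E f"
proof -
  define F where "F = (\<lambda>k::nat. (\<lambda>x. if x \<in> V then (f^^k) x else undefined))"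
  have "F ` UNIV \<subseteq> {g. \<forall>x. (x \<in> V \<longrightarrow> g x \<in> V) \<and> (x \<notin> V \<longrightarrow> g x = undefined)}"
    using pow_in[OF h] by (auto simp: F_def)
  hence "finite (F ` UNIV)"
    using finite_subset finite_set_of_finite_funs[OF fin fin] by blast
  hence "\<not> inj F" using finite_imageD by blast
  then obtain a b where ab: "a \<noteq> b" "F a = F b" unfolding inj_def by blast
  obtain i j where ij: "i < j" "F i = F j"
    using ab by (metis linorder_neqE_nat)
  have eqij: "(f^^j) x = (f^^i) x" if "x \<in> V" for x
    using fun_cong[OF ij(2), of x] that by (simp add: F_def)
  define d where "d = j - i"
  have d1: "d \<ge> 1" using ij by (simp add: d_def)
  have jd: "j = d + i" using ij by (simp add: d_def)
  have per: "(f^^(d*k)) ((f^^i) x) = (f^^i) x" if "x \<in> V" for x k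
  proof (induction k)
    case 0 then show ?case by simp
  next
    case (Suc k)
    have "(f^^(d*Suc k)) ((f^^i) x) = (f^^(d*k)) ((f^^d) ((f^^i) x))"
      by (metis funpow_add mult_Suc_right add.commute comp_apply)
    also have "(f^^d) ((f^^i) x) = (f^^j) x" by (simp add: jd funpow_add)
    also have "\<dots> = (f^^i) x" using eqij that by simp
    finally show ?case using Suc by simp
  qed
  define R where "R = (f^^i) ` V"
  define m where "m = d * (i+1)"
  have mi: "m \<ge> i + 1" using d1 mult_le_mono1[OF d1, of "i+1"] by (simp add: m_def)
  have mR: "(f^^m) x \<in> R" if "x \<in> V" for x
  proof -
    have "(f^^m) x = (f^^i) ((f^^(m-i)) x)"
    proof -
      have "m = i + (m - i)" using mi by simp
      then have "f^^m = f^^i \<circ> f^^(m-i)" by (metis funpow_add)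
      then show ?thesis by simp
    qed
    then show ?thesis using pow_in[OF h that] R_def by auto
  qed
  have Rid: "(f^^m) v = v" if "v \<in> R" for v
    using that per unfolding R_def m_def by (metis imageE)
  have RV: "R \<subseteq> V" using pow_in[OF h] R_def by auto
  have lim: "locally_injective V E (f^^m)" by (rule pow_li[OF h li])
  have closed: "w \<in> R" if "v \<in> R" "E v w" for v w
  proof -
    let ?N = "{w. E v w}"
    have NV: "?N \<subseteq> V" using g unfolding is_graph_def by blast
    have finN: "finite ?N" using finite_subset[OF NV fin] .
    have img: "(f^^m) ` ?N \<subseteq> ?N"
      using pow_edge[OF h, of v _ m] Rid[OF \<open>v \<in> R\<close>] by auto
    have vV: "v \<in> V" using RV that by auto
    have "inj_on (f^^m) ?N"
    proof (rule inj_onI)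
      fix x y assume "x \<in> ?N" "y \<in> ?N" "(f^^m) x = (f^^m) y"
      moreover have "E x v" "E y v" using \<open>x \<in> ?N\<close> \<open>y \<in> ?N\<close> g unfolding is_graph_def by auto
      ultimately show "x = y" using lim NV vV unfolding locally_injective_def by blast
    qed
    hence "(f^^m) ` ?N = ?N" using endo_inj_surj[OF finN img] by blast
    hence "w \<in> (f^^m) ` ?N" using that by auto
    then show ?thesis using mR NV by auto
  qed
  obtain v0 where v0: "v0 \<in> V" using con unfolding connected_graph_def by auto
  have v0R: "(f^^i) v0 \<in> R" using v0 R_def by auto
  have allR: "x \<in> R" if "x \<in> V" for x
  proof -
    have "E\<^sup>*\<^sup>* ((f^^i) v0) x" using con that RV v0R unfolding connected_graph_def by auto
    then show ?thesis
    proof (induction rule: rtranclp_induct)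
      case base then show ?case using v0R .
    next
      case (step y z) then show ?case using closed by blast
    qed
  qed
  have idV: "(f^^m) x = x" if "x \<in> V" for x using Rid allR that by blast
  obtain m' where m': "m = Suc m'" using mi by (cases m) auto
  have idV': "(f^^m') (f x) = x" if "x \<in> V" for x
    using idV[OF that] m' by (simp add: funpow_Suc_right del: funpow.simps)
  have fV: "f x \<in> V" if "x \<in> V" for x using h that unfolding is_hom_def by auto
  have inj: "inj_on f V" by (metis idV' inj_onI)
  have surj: "f ` V = V"
  proof
    show "f ` V \<subseteq> V" using fV by auto
    show "V \<subseteq> f ` V"
    proof
      fix x assume x: "x \<in> V"
      have "x = f ((f^^m') x)" using idV[OF x] m' by simp
      moreover have "(f^^m') x \<in> V" using pow_in[OF h x] .
      ultimately show "x \<in> f ` V" by blast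
    qed
  qed
  have "E (f u) (f v) \<longleftrightarrow> E u v" if "u \<in> V" "v \<in> V" for u v
  proof
    assume "E (f u) (f v)"
    then have "E ((f^^m') (f u)) ((f^^m') (f v))" by (rule pow_edge[OF h])
    then show "E u v" using idV' that by simp
  next
    assume "E u v" then show "E (f u) (f v)" using h unfolding is_hom_def by auto
  qed
  then show ?thesis unfolding is_automorphism_def bij_betw_def using inj surj by auto
qed

theorem lemma4p2:
  fixes V :: "'a set" and E :: "'a \<Rightarrow> 'a \<Rightarrow> bool"
  assumes "is_graph V E" and "finite V" and "connected_graph V E"
  shows "(is_core V E \<longrightarrow>
            (\<exists>(VH :: 'a set) EH. is_graph VH EH \<and> hom_exists V E VH EH \<and>
               (\<forall>f. is_hom V E VH EH f \<longrightarrow> locally_injective V E f)))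
       \<and> (\<forall>(VH :: 'b set) EH. is_graph VH EH \<and> hom_exists V E VH EH \<and>
               (\<forall>f. is_hom V E VH EH f \<longrightarrow> locally_injective V E f) \<longrightarrow> is_core V E)"
proof (intro conjI impI allI)
  assume c: "is_core V E"
  have "is_hom V E V E id" by (simp add: is_hom_def)
  moreover have "locally_injective V E f" if "is_hom V E V E f" for f
  proof -
    have "inj_on f V" using c that unfolding is_core_def is_automorphism_def bij_betw_def by blast
    then show ?thesis unfolding locally_injective_def by (meson inj_onD)
  qed
  ultimately show "\<exists>(VH :: 'a set) EH. is_graph VH EH \<and> hom_exists V E VH EH \<and>
               (\<forall>f. is_hom V E VH EH f \<longrightarrow> locally_injective V E f)"
    using assms(1) unfolding hom_exists_def by blast
next
  fix VH :: "'b set" and EH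
  assume a: "is_graph VH EH \<and> hom_exists V E VH EH \<and>
               (\<forall>f. is_hom V E VH EH f \<longrightarrow> locally_injective V E f)"
  then obtain g where g: "is_hom V E VH EH g" unfolding hom_exists_def by blast
  show "is_core V E" unfolding is_core_def
  proof (intro allI impI)
    fix f assume f: "is_hom V E V E f"
    have "is_hom V E VH EH (g \<circ> f)" using f g unfolding is_hom_def by auto
    hence "locally_injective V E (g \<circ> f)" using a by blast
    hence "locally_injective V E f" unfolding locally_injective_def by (metis comp_apply)
    then show "is_automorphism V E f" using key[OF assms f] by blast
  qed
qed

end
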